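(* Let $\omega\in\mathbb{H}$, and let $g\in\mathrm{PSL}_2(\mathbb{Z})$ be such that $g^{-1}\cdot\omega\in D_0+n$ for some $n\in\mathbb{Z}$. Assume $g\cdot\infty\neq\infty$ and write $g\cdot\infty=p/q$ in lowest terms with $q>0$. Let $\delta$ be the diameter of the (Euclidean) circle in the upper half-plane that is tangent to the real axis at $p/q$ and passes through $\omega$. Then $f(\omega)=\delta\,q^2$.
   Context: $\mathbb{H}=\{\omega\in\mathbb{C}:\mathrm{Im}(\omega)>0\}$. For $\omega\in\mathbb{H}$, $d(\omega)=\min\{|\alpha+\beta\omega| : \alpha,\beta\in\mathbb{Z},\ (\alpha,\beta)\neq(0,0)\}$ and $f(\omega)=d(\omega)^2/\mathrm{Im}(\omega)$. $\mathrm{PSL}_2(\mathbb{Z})$ acts on $\mathbb{H}\cup\mathbb{R}\cup\{\infty\}$ by $\begin{pmatrix}a&b\\c&d\end{pmatrix}\cdot\omega=\frac{a\omega+b}{c\omega+d}$, with $g\cdot\infty=a/c$ if $c\ne0$ and $g\cdot\infty=\infty$ if $c=0$. $D_0=\{\omega\in\mathbb{C}: -1/2\le\mathrm{Re}(\omega)\le1/2,\ |\omega|\ge1\}$ and $D_0+n=\{\zeta+n:\zeta\in D_0\}$. *)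

theory Defs
  imports "HOL-Analysis.Analysis"
begin

definition upper_half_plane :: "complex set" where
  "upper_half_plane = {w. Im w > 0}"

text \<open>d(w) = min of |alpha + beta w| over nonzero integer pairs (the minimum exists; we write it as Inf).\<close>
definition lat_d :: "complex \<Rightarrow> real" where
  "lat_d w = Inf {cmod (of_int \<alpha> + of_int \<beta> * w) | \<alpha> \<beta> :: int. (\<alpha>, \<beta>) \<noteq> (0, 0)}"

definition f_fun :: "complex \<Rightarrow> real" where
  "f_fun w = (lat_d w)\<^sup>2 / Im w"

definition moeb :: "int \<Rightarrow> int \<Rightarrow> int \<Rightarrow> int \<Rightarrow> complex \<Rightarrow> complex" where
  "moeb a b c d w = (of_int a * w + of_int b) / (of_int c * w + of_int d)"

definition D0 :: "complex set" where
  "D0 = {z. -1/2 \<le> Re z \<and> Re z \<le> 1/2 \<and> cmod z \<ge> 1}"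

end

theory Submission
  imports Defs
begin

lemma int_quad_ge1:
  fixes u k :: int
  assumes "(u, k) \<noteq> (0, 0)"
  shows "u^2 - \<bar>u*k\<bar> + k^2 \<ge> 1"
proof (cases "u = 0 \<or> k = 0")
  case True
  then show ?thesis using assms
    by (auto simp: power2_eq_square) (metis abs_ge_zero abs_mult_self_eq int_one_le_iff_zero_less zero_less_abs_iff zero_less_mult_iff)+
next
  case False
  then have "\<bar>u*k\<bar> \<ge> 1" by (simp add: abs_mult) (metis abs_ge_zero abs_mult int_one_le_iff_zero_less mult_eq_0_iff zero_less_abs_iff)
  moreover have "u^2 + k^2 \<ge> 2*\<bar>u*k\<bar>"
  proof -
    have "0 \<le> (\<bar>u\<bar> - \<bar>k\<bar>)^2" by simp
    then show ?thesis by (simp add: power2_eq_square algebra_simps abs_mult)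
  qed
  ultimately show ?thesis by linarith
qed

lemma D0_bound:
  fixes u k :: int
  assumes "z \<in> D0" "(u, k) \<noteq> (0, 0)"
  shows "cmod (of_int u + of_int k * z) \<ge> 1"
proof -
  let ?x = "Re z" and ?y = "Im z"
  have hx: "\<bar>?x\<bar> \<le> 1/2" using assms(1) by (auto simp: D0_def)
  have hn: "?x^2 + ?y^2 \<ge> 1" using assms(1) unfolding D0_def
    by (auto simp: cmod_def)
  define ru where "ru = real_of_int u"
  define rk where "rk = real_of_int k"
  have e: "(cmod (of_int u + of_int k * z))^2 = (ru + rk*?x)^2 + (rk*?y)^2"
    by (simp add: cmod_def ru_def rk_def)
  have i1: "ru^2 - \<bar>ru*rk\<bar> + rk^2 \<ge> 1" using int_quad_ge1[OF assms(2)] unfolding ru_def rk_def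
    by (metis of_int_1_le_iff of_int_abs of_int_add of_int_diff of_int_mult of_int_power)
  have t1: "2*ru*rk*?x \<ge> - \<bar>ru * rk\<bar>"
  proof -
    have "\<bar>2*ru*rk*?x\<bar> = \<bar>ru * rk\<bar> * (2*\<bar>?x\<bar>)" by (simp add: abs_mult)
    also have "\<dots> \<le> \<bar>ru * rk\<bar> * 1" by (rule mult_left_mono) (use hx in auto)
    finally show ?thesis by linarith
  qed
  have t2: "rk^2 * (?x^2 + ?y^2) \<ge> rk^2" using hn
    by (metis mult.right_neutral mult_left_mono zero_le_power2)
  have "(ru + rk*?x)^2 + (rk*?y)^2 = ru^2 + 2*ru*rk*?x + rk^2*(?x^2+?y^2)"
    by (simp add: power2_eq_square algebra_simps)
  also have "\<dots> \<ge> ru^2 - \<bar>ru * rk\<bar> + rk^2" using t1 t2 by linarith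
  finally have "(cmod (of_int u + of_int k * z))^2 \<ge> 1" using e i1 by simp
  then show ?thesis by (metis abs_norm_cancel one_le_power real_sqrt_abs real_sqrt_ge_one real_sqrt_one)
qed

theorem proposition3:
  fixes \<omega> :: complex and a b c d p q :: int and \<delta> :: real
  assumes "\<omega> \<in> upper_half_plane"
    and det: "a * d - b * c = 1"
    and fund: "\<exists>n::int. moeb d (-b) (-c) a \<omega> \<in> (\<lambda>z. z + of_int n) ` D0"
    and not_inf: "c \<noteq> 0"
    and lowest: "coprime p q" "q > 0"
    and cusp: "real_of_int a / real_of_int c = real_of_int p / real_of_int q"
    and circ: "\<delta> > 0"
      "cmod (\<omega> - (of_real (real_of_int p / real_of_int q) + \<i> * of_real (\<delta> / 2))) = \<delta> / 2"
  shows "f_fun \<omega> = \<delta> * (real_of_int q)\<^sup>2"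
proof -
  have im: "Im \<omega> > 0" using assms(1) by (simp add: upper_half_plane_def)
  define w where "w = of_int a - of_int c * \<omega>"
  have Imw: "Im w = - c * Im \<omega>" by (simp add: w_def)
  have wnz: "w \<noteq> 0" using Imw im not_inf by auto
  define z where "z = moeb d (-b) (-c) a \<omega>"
  have zw: "z * w = of_int d * \<omega> - of_int b"
    using wnz by (simp add: z_def moeb_def w_def field_simps)
  obtain n :: int and z' where z': "z' \<in> D0" "z = z' + of_int n" using fund z_def by auto
  have lb: "cmod w \<le> cmod (of_int \<alpha> + of_int \<beta> * \<omega>)" if "(\<alpha>, \<beta>) \<noteq> (0, 0)" for \<alpha> \<beta> :: int
  proof -
    define m where "m = d*\<alpha> + b*\<beta>"
    define k where "k = c*\<alpha> + a*\<beta>"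
    have "m*a - k*b = \<alpha>" "k*d - m*c = \<beta>"
      unfolding m_def k_def using det by (simp_all add: algebra_simps)
    then have eq: "of_int \<alpha> + of_int \<beta> * \<omega> = (of_int m + of_int k * z) * w"
    proof -
      have "(of_int m + of_int k * z) * w = of_int m * w + of_int k * (z * w)" by (simp add: algebra_simps)
      also have "\<dots> = of_int (m*a - k*b) + of_int (k*d - m*c) * \<omega>"
        unfolding zw by (simp add: w_def algebra_simps)
      finally show ?thesis using \<open>m*a - k*b = \<alpha>\<close> \<open>k*d - m*c = \<beta>\<close> by simp
    qed
    have mk: "(m + k*n, k) \<noteq> (0, 0)"
    proof
      assume "(m + k*n, k) = (0, 0)"
      then have "m = 0" "k = 0" by auto
      then show False using \<open>m*a - k*b = \<alpha>\<close> \<open>k*d - m*c = \<beta>\<close> that by auto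
    qed
    have "of_int m + of_int k * z = of_int (m + k*n) + of_int k * z'" using z' by (simp add: algebra_simps)
    then have "cmod (of_int m + of_int k * z) \<ge> 1" using D0_bound[OF z'(1) mk] by (simp add: add.assoc)
    then have "cmod w * 1 \<le> cmod w * cmod (of_int m + of_int k * z)" by (intro mult_left_mono) auto
    moreover have "cmod (of_int \<alpha> + of_int \<beta> * \<omega>) = cmod (of_int m + of_int k * z) * cmod w"
      by (simp only: eq norm_mult)
    ultimately show ?thesis by (simp add: mult.commute)
  qed
  have dw: "lat_d \<omega> = cmod w"
    unfolding lat_d_def
  proof (rule cInf_eq_minimum)
    show "cmod w \<in> {cmod (of_int \<alpha> + of_int \<beta> * \<omega>) | \<alpha> \<beta> :: int. (\<alpha>, \<beta>) \<noteq> (0, 0)}"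
      using not_inf by (intro CollectI exI[of _ a] exI[of _ "-c"]) (auto simp: w_def)
  next
    fix y assume "y \<in> {cmod (of_int \<alpha> + of_int \<beta> * \<omega>) | \<alpha> \<beta> :: int. (\<alpha>, \<beta>) \<noteq> (0, 0)}"
    then show "cmod w \<le> y" using lb by auto
  qed
  have aq: "a*q = p*c" using cusp not_inf lowest(2)
    by (simp add: field_simps) (metis of_int_eq_iff of_int_mult)
  have cop: "coprime a c"
  proof (rule coprimeI)
    fix x assume "x dvd a" "x dvd c"
    then have "x dvd a*d - b*c" by (simp add: dvd_mult2 dvd_mult)
    then show "is_unit x" using det by simp
  qed
  have "q dvd p*c" using aq by (metis dvd_triv_right)
  then have qc: "q dvd c" using lowest(1) by (metis coprime_commute coprime_dvd_mult_right_iff)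
  have "c dvd a*q" using aq by (metis dvd_triv_right)
  then have cq: "c dvd q" using coprime_dvd_mult_right_iff[of c a q] cop by (simp add: coprime_commute)
  have "\<bar>c\<bar> = q" using qc cq lowest(2) by (metis zdvd_antisym_abs abs_of_pos)
  then have c2: "(real_of_int c)^2 = (real_of_int q)^2"
    by (metis of_int_power power2_abs)
  define x0 where "x0 = real_of_int p / real_of_int q"
  have x0: "x0 = real_of_int a / real_of_int c" using cusp x0_def by simp
  have "(cmod (\<omega> - (of_real x0 + \<i> * of_real (\<delta> / 2))))^2 = (\<delta>/2)^2"
    using circ(2) unfolding x0_def[symmetric] by (rule arg_cong[where f="\<lambda>t. t^2"])
  then have "(Re \<omega> - x0)^2 + (Im \<omega> - \<delta>/2)^2 = (\<delta>/2)^2"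
    by (simp add: cmod_def)
  then have circ2: "(Re \<omega> - x0)^2 + (Im \<omega>)^2 = \<delta> * Im \<omega>"
    by (simp add: power2_eq_square algebra_simps)
  have "(cmod w)^2 = (a - c*Re \<omega>)^2 + (c * Im \<omega>)^2" by (simp add: cmod_def w_def)
  also have "\<dots> = (real_of_int c)^2 * ((Re \<omega> - x0)^2 + (Im \<omega>)^2)"
    using not_inf by (simp add: x0 power2_eq_square field_simps)
  also have "\<dots> = (real_of_int q)^2 * (\<delta> * Im \<omega>)" using c2 circ2 by simp
  finally show ?thesis using im by (simp add: f_fun_def dw)
qed

end
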